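(* Let $G=(V,E)$ be a finite connected undirected graph and let $M \subseteq V$ be the set of marked vertices, where the subgraph of $G$ induced by $M$ is connected. Suppose that the subgraph of $G$ induced by $V \setminus M$ is disconnected. Then the quantum walk search on $G$ with marked set $M$ (as described in the context) has a stationary state.
   Context: Quantum walk search model: the Hilbert space has orthonormal basis $\{|u,v\rangle : \{u,v\}\in E\}$ (one basis vector per arc, i.e. per ordered pair of adjacent vertices). For a vertex $u$ with neighbourhood $N(u)$, let $|s_u\rangle = \frac{1}{\sqrt{\deg_G(u)}}\sum_{v\in N(u)}|u,v\rangle$ and $G_u = 2|s_u\rangle\langle s_u| - I$ (Grover diffusion) acting on $\mathrm{span}\{|u,v\rangle : v\in N(u)\}$. The coin $C$ acts as $G_u$ on the arcs leaving each unmarked vertex $u\notin M$ and as $-G_u$ on the arcs leaving each marked vertex $u\in M$; the flip-flop shift is $S|u,v\rangle = |v,u\rangle$; one step of the walk is $U = SC$. A stationary state is a nonzero vector $|\psi\rangle$ with $U|\psi\rangle = |\psi\rangle$. *)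

theory Defs
  imports Complex_Main
begin

definition simple_graph :: "'a set \<Rightarrow> ('a \<times> 'a) set \<Rightarrow> bool" where
  "simple_graph V E \<longleftrightarrow> finite V \<and> E \<subseteq> V \<times> V \<and> sym E \<and> irrefl E"

definition nbhd :: "('a \<times> 'a) set \<Rightarrow> 'a \<Rightarrow> 'a set" where
  "nbhd E u = {v. (u, v) \<in> E}"

definition deg :: "('a \<times> 'a) set \<Rightarrow> 'a \<Rightarrow> nat" where
  "deg E u = card (nbhd E u)"

definition reach_in :: "('a \<times> 'a) set \<Rightarrow> 'a set \<Rightarrow> 'a \<Rightarrow> 'a \<Rightarrow> bool" where
  "reach_in E S = (\<lambda>x y. x \<in> S \<and> y \<in> S \<and> (x, y) \<in> E)\<^sup>*\<^sup>*"

definition connected_induced :: "('a \<times> 'a) set \<Rightarrow> 'a set \<Rightarrow> bool" where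
  "connected_induced E S \<longleftrightarrow> S \<noteq> {} \<and> (\<forall>x\<in>S. \<forall>y\<in>S. reach_in E S x y)"

definition disconnected_induced :: "('a \<times> 'a) set \<Rightarrow> 'a set \<Rightarrow> bool" where
  "disconnected_induced E S \<longleftrightarrow> (\<exists>x\<in>S. \<exists>y\<in>S. \<not> reach_in E S x y)"

text \<open>States: complex amplitudes on arcs; vectors are functions on pairs vanishing off E.\<close>
definition coin :: "('a \<times> 'a) set \<Rightarrow> 'a set \<Rightarrow> ('a \<times> 'a \<Rightarrow> complex) \<Rightarrow> ('a \<times> 'a \<Rightarrow> complex)" where
  "coin E M \<psi> = (\<lambda>(u, v). if (u, v) \<in> E then
      (if u \<in> M then -1 else 1) *
        ((2 / of_nat (deg E u)) * (\<Sum>w\<in>nbhd E u. \<psi> (u, w)) - \<psi> (u, v))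
      else 0)"

definition shift :: "('a \<times> 'a \<Rightarrow> complex) \<Rightarrow> ('a \<times> 'a \<Rightarrow> complex)" where
  "shift \<phi> = (\<lambda>(u, v). \<phi> (v, u))"

definition walk_op :: "('a \<times> 'a) set \<Rightarrow> 'a set \<Rightarrow> ('a \<times> 'a \<Rightarrow> complex) \<Rightarrow> ('a \<times> 'a \<Rightarrow> complex)" where
  "walk_op E M \<psi> = shift (coin E M \<psi>)"

definition is_state :: "('a \<times> 'a) set \<Rightarrow> ('a \<times> 'a \<Rightarrow> complex) \<Rightarrow> bool" where
  "is_state E \<psi> \<longleftrightarrow> (\<forall>a. a \<notin> E \<longrightarrow> \<psi> a = 0)"

definition stationary_state :: "('a \<times> 'a) set \<Rightarrow> 'a set \<Rightarrow> ('a \<times> 'a \<Rightarrow> complex) \<Rightarrow> bool" where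
  "stationary_state E M \<psi> \<longleftrightarrow> is_state E \<psi> \<and> \<psi> \<noteq> (\<lambda>_. 0) \<and> walk_op E M \<psi> = \<psi>"

end

theory Submission
  imports Defs
begin

definition dlt :: "'a \<Rightarrow> 'a \<Rightarrow> complex" where
  "dlt a v = (if v = a then 1 else 0)"

definition divset :: "('a \<times> 'a) set \<Rightarrow> 'a set \<Rightarrow> ('a \<Rightarrow> complex) set" where
  "divset E M = {f. \<exists>x. (\<forall>a b. x (a, b) = x (b, a)) \<and>
      (\<forall>v\<in>M. f v = (\<Sum>w\<in>nbhd E v \<inter> M. x (v, w)))}"

lemma divset_zero: "(\<lambda>_. 0) \<in> divset E M"
  unfolding divset_def by (rule CollectI, rule exI[of _ "\<lambda>_. 0"]) simp

lemma divset_add: "f \<in> divset E M \<Longrightarrow> g \<in> divset E M \<Longrightarrow> (\<lambda>v. f v + g v) \<in> divset E M"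
proof -
  assume "f \<in> divset E M" "g \<in> divset E M"
  then obtain x y where x: "\<forall>a b. x (a, b) = x (b, a)" "\<forall>v\<in>M. f v = (\<Sum>w\<in>nbhd E v \<inter> M. x (v, w))"
    and y: "\<forall>a b. y (a, b) = y (b, a)" "\<forall>v\<in>M. g v = (\<Sum>w\<in>nbhd E v \<inter> M. y (v, w))"
    unfolding divset_def by blast
  show ?thesis unfolding divset_def
    by (rule CollectI, rule exI[of _ "\<lambda>z. x z + y z"]) (simp add: x y sum.distrib)
qed

lemma divset_scale: "f \<in> divset E M \<Longrightarrow> (\<lambda>v. a * f v) \<in> divset E M"
proof -
  assume "f \<in> divset E M"
  then obtain x where x: "\<forall>a b. x (a, b) = x (b, a)" "\<forall>v\<in>M. f v = (\<Sum>w\<in>nbhd E v \<inter> M. x (v, w))"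
    unfolding divset_def by blast
  show ?thesis unfolding divset_def
    by (rule CollectI, rule exI[of _ "\<lambda>z. a * x z"]) (simp add: x sum_distrib_left)
qed

lemma divset_agree: "f \<in> divset E M \<Longrightarrow> (\<forall>v\<in>M. g v = f v) \<Longrightarrow> g \<in> divset E M"
  unfolding divset_def by auto

lemma divset_sum: "finite A \<Longrightarrow> (\<forall>i\<in>A. F i \<in> divset E M) \<Longrightarrow> (\<lambda>v. \<Sum>i\<in>A. F i v) \<in> divset E M"
proof (induction A rule: finite_induct)
  case empty
  then show ?case using divset_zero by simp
next
  case (insert a A)
  then have "(\<lambda>v. F a v + (\<Sum>i\<in>A. F i v)) \<in> divset E M"
    using divset_add[of "F a" E M "\<lambda>v. \<Sum>i\<in>A. F i v"] by simp
  then show ?case using insert by simp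
qed

lemma divset_edge:
  assumes "m \<noteq> m'" "m \<in> M" "m' \<in> M" "(m, m') \<in> E" "sym E" "finite M"
  shows "(\<lambda>v. dlt m v + dlt m' v) \<in> divset E M"
proof -
  define x where "x = (\<lambda>(a, b). (if a = m \<and> b = m' then 1 else 0) + (if a = m' \<and> b = m then (1::complex) else 0))"
  have xs: "\<forall>a b. x (a, b) = x (b, a)"
  proof (intro allI)
    fix a b
    have 1: "(a = m \<and> b = m') = (b = m' \<and> a = m)" by blast
    have 2: "(a = m' \<and> b = m) = (b = m \<and> a = m')" by blast
    show "x (a, b) = x (b, a)" unfolding x_def prod.case 1 2 by (rule add.commute)
  qed
  have "(m', m) \<in> E" using assms(4,5) by (meson symD)
  have "\<forall>v\<in>M. dlt m v + dlt m' v = (\<Sum>w\<in>nbhd E v \<inter> M. x (v, w))"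
  proof
    fix v assume "v \<in> M"
    have "(\<Sum>w\<in>nbhd E v \<inter> M. x (v, w)) = (\<Sum>w\<in>nbhd E v \<inter> M. (if v = m \<and> w = m' then 1 else 0))
       + (\<Sum>w\<in>nbhd E v \<inter> M. (if v = m' \<and> w = m then 1 else 0))"
      unfolding x_def by (simp add: sum.distrib)
    also have "(\<Sum>w\<in>nbhd E v \<inter> M. (if v = m \<and> w = m' then 1 else 0)) = dlt m v"
    proof (cases "v = m")
      case True
      have "m' \<in> nbhd E v \<inter> M" using True assms by (simp add: nbhd_def)
      have "(\<Sum>w\<in>nbhd E v \<inter> M. (if v = m \<and> w = m' then (1::complex) else 0)) = (\<Sum>w\<in>nbhd E v \<inter> M. (if w = m' then 1 else 0))"
        using True by simp
      also have "\<dots> = 1" using \<open>m' \<in> nbhd E v \<inter> M\<close> assms(6) by (simp add: sum.delta)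
      finally show ?thesis using True by (simp add: dlt_def)
    qed (simp add: dlt_def)
    also have "(\<Sum>w\<in>nbhd E v \<inter> M. (if v = m' \<and> w = m then 1 else 0)) = dlt m' v"
    proof (cases "v = m'")
      case True
      have "m \<in> nbhd E v \<inter> M" using True assms \<open>(m', m) \<in> E\<close> by (simp add: nbhd_def)
      have "(\<Sum>w\<in>nbhd E v \<inter> M. (if v = m' \<and> w = m then (1::complex) else 0)) = (\<Sum>w\<in>nbhd E v \<inter> M. (if w = m then 1 else 0))"
        using True by simp
      also have "\<dots> = 1" using \<open>m \<in> nbhd E v \<inter> M\<close> assms(6) by (simp add: sum.delta)
      finally show ?thesis using True by (simp add: dlt_def)
    qed (simp add: dlt_def)
    finally show "dlt m v + dlt m' v = (\<Sum>w\<in>nbhd E v \<inter> M. x (v, w))" by simp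
  qed
  then show ?thesis unfolding divset_def using xs by blast
qed

lemma walk_lemma:
  assumes "reach_in E M r m" "r \<in> M" "sym E" "irrefl E" "finite M"
  shows "\<exists>s. (s = 1 \<or> s = -1) \<and> (\<lambda>v. dlt r v - s * dlt m v) \<in> divset E M"
  using assms(1) unfolding reach_in_def
proof (induction rule: rtranclp_induct)
  case base
  show ?case by (rule exI[of _ 1]) (simp add: divset_zero)
next
  case (step m m')
  then obtain s where s: "s = 1 \<or> s = -1" "(\<lambda>v. dlt r v - s * dlt m v) \<in> divset E M" by blast
  have "(m, m') \<in> E" using step(2) by simp
  then have "m \<noteq> m'" using assms(4) unfolding irrefl_def by blast
  then have g: "(\<lambda>v. dlt m v + dlt m' v) \<in> divset E M"
    using divset_edge[of m m' M E] step(2) assms(3) assms(5) by simp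
  have "(\<lambda>v. (dlt r v - s * dlt m v) + s * (dlt m v + dlt m' v)) \<in> divset E M"
    using divset_add[OF s(2) divset_scale[OF g]] .
  moreover have "(\<lambda>v. (dlt r v - s * dlt m v) + s * (dlt m v + dlt m' v)) = (\<lambda>v. dlt r v - (-s) * dlt m' v)"
    by (rule ext) (simp add: algebra_simps)
  ultimately have "(\<lambda>v. dlt r v - (-s) * dlt m' v) \<in> divset E M" by simp
  moreover have "-s = 1 \<or> -s = -1" using s(1) by auto
  ultimately show ?case by (intro exI[of _ "-s"] conjI)
qed

lemma solve_lemma:
  assumes fin: "finite M" and r: "r \<in> M"
    and s: "\<forall>m\<in>M. (s m = 1 \<or> s m = -1) \<and> (\<lambda>v. dlt r v - s m * dlt m v) \<in> divset E M"
    and z: "(\<Sum>m\<in>M. s m * b m) = 0"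
  shows "b \<in> divset E M"
proof -
  define g where "g = (\<lambda>v. \<Sum>m\<in>M. (- b m * s m) * (dlt r v - s m * dlt m v))"
  have "g \<in> divset E M" unfolding g_def
    by (rule divset_sum[OF fin]) (use s divset_scale in blast)
  moreover have "\<forall>v\<in>M. b v = g v"
  proof
    fix v assume v: "v \<in> M"
    have "g v = (\<Sum>m\<in>M. - (s m * b m) * dlt r v) + (\<Sum>m\<in>M. b m * (s m * s m) * dlt m v)"
      unfolding g_def by (simp add: sum.distrib[symmetric] algebra_simps)
    also have "(\<Sum>m\<in>M. - (s m * b m) * dlt r v) = 0"
      using z by (simp add: sum_distrib_right[symmetric] sum_negf)
    also have "(\<Sum>m\<in>M. b m * (s m * s m) * dlt m v) = (\<Sum>m\<in>M. if m = v then b v else 0)"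
      by (rule sum.cong) (use s v in \<open>auto simp: dlt_def\<close>)
    also have "\<dots> = b v" using fin v by simp
    finally show "b v = g v" by simp
  qed
  ultimately show ?thesis using divset_agree by blast
qed


lemma stat_lemma:
  assumes sg: "simple_graph V E"
    and cc: "\<And>u v. (u, v) \<in> E \<Longrightarrow> u \<notin> M \<Longrightarrow> v \<notin> M \<Longrightarrow> c u = c v"
    and xs: "\<forall>a b. x (a, b) = x (b, a)"
    and bal: "\<forall>v\<in>M. (\<Sum>w\<in>nbhd E v \<inter> M. x (v, w)) = - (\<Sum>w\<in>nbhd E v - M. c w)"
    and psi: "\<psi> = (\<lambda>(u, v). if (u, v) \<in> E then (if u \<notin> M then c u else if v \<notin> M then c v else x (u, v)) else 0)"
  shows "walk_op E M \<psi> = \<psi>"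
proof (rule ext, clarify)
  fix u v
  have EV: "E \<subseteq> V \<times> V" and finV: "finite V" and sE: "sym E" using sg by (auto simp: simple_graph_def)
  show "walk_op E M \<psi> (u, v) = \<psi> (u, v)"
  proof (cases "(v, u) \<in> E")
    case False
    then have "(u, v) \<notin> E" using sE by (meson symD)
    then show ?thesis using False by (simp add: walk_op_def shift_def coin_def psi)
  next
    case True
    then have uv: "(u, v) \<in> E" using sE by (meson symD)
    define N where "N = nbhd E v"
    have finN: "finite N" unfolding N_def nbhd_def
      by (rule finite_subset[OF _ finV]) (use EV in auto)
    have uN: "u \<in> N" using True by (simp add: N_def nbhd_def)
    have "card N > 0" using finN uN card_gt_0_iff by blast
    then have d0: "(of_nat (deg E v) :: complex) \<noteq> 0" by (simp add: deg_def N_def)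
    have w: "walk_op E M \<psi> (u, v) = (if v \<in> M then -1 else 1) * ((2 / of_nat (deg E v)) * (\<Sum>w\<in>N. \<psi> (v, w)) - \<psi> (v, u))"
      by (simp add: walk_op_def shift_def coin_def True N_def)
    show ?thesis
    proof (cases "v \<in> M")
      case vM: True
      have "(\<Sum>w\<in>N. \<psi> (v, w)) = (\<Sum>w\<in>N \<inter> M. \<psi> (v, w)) + (\<Sum>w\<in>N - M. \<psi> (v, w))"
        using finN by (rule sum.Int_Diff)
      also have "(\<Sum>w\<in>N \<inter> M. \<psi> (v, w)) = (\<Sum>w\<in>N \<inter> M. x (v, w))"
        by (rule sum.cong) (auto simp: psi N_def nbhd_def vM)
      also have "(\<Sum>w\<in>N - M. \<psi> (v, w)) = (\<Sum>w\<in>N - M. c w)"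
        by (rule sum.cong) (auto simp: psi N_def nbhd_def vM)
      finally have "(\<Sum>w\<in>N. \<psi> (v, w)) = 0" using bal vM by (simp add: N_def)
      then have "walk_op E M \<psi> (u, v) = \<psi> (v, u)" using w vM by simp
      also have "\<psi> (v, u) = \<psi> (u, v)"
        using True uv vM xs by (simp add: psi)
      finally show ?thesis .
    next
      case vM: False
      have "(\<Sum>w\<in>N. \<psi> (v, w)) = (\<Sum>w\<in>N. c v)"
        by (rule sum.cong) (auto simp: psi N_def nbhd_def vM)
      also have "\<dots> = of_nat (deg E v) * c v" by (simp add: deg_def N_def)
      finally have sm: "(\<Sum>w\<in>N. \<psi> (v, w)) = of_nat (deg E v) * c v" .
      have pvu: "\<psi> (v, u) = c v" using True vM by (simp add: psi)
      have "walk_op E M \<psi> (u, v) = (2 / of_nat (deg E v)) * (of_nat (deg E v) * c v) - c v"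
        using w vM sm pvu by simp
      also have "\<dots> = c v" using d0 by (simp add: field_simps)
      also have "c v = \<psi> (u, v)"
      proof (cases "u \<in> M")
        case True then show ?thesis using uv vM by (simp add: psi)
      next
        case False then show ?thesis using uv vM cc[OF uv] by (simp add: psi)
      qed
      finally show ?thesis .
    qed
  qed
qed

lemma reach_step:
  assumes "reach_in E S a u" "(u, v) \<in> E" "u \<in> S" "v \<in> S"
  shows "reach_in E S a v"
  using assms unfolding reach_in_def by (simp add: rtranclp.rtrancl_into_rtrancl)

theorem theorem3:
  fixes V :: "'a set" and E :: "('a \<times> 'a) set" and M :: "'a set"
  assumes "simple_graph V E"
    and "connected_induced E V"
    and "M \<subseteq> V"
    and "connected_induced E M"
    and "disconnected_induced E (V - M)"
  shows "\<exists>\<psi>. stationary_state E M \<psi>"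
proof -
  have EV: "E \<subseteq> V \<times> V" and finV: "finite V" and sE: "sym E" and iE: "irrefl E"
    using assms(1) by (auto simp: simple_graph_def)
  have finM: "finite M" using finV assms(3) finite_subset by blast
  define R where "R = reach_in E (V - M)"
  obtain p q where p: "p \<in> V - M" and q: "q \<in> V - M" and npq: "\<not> R p q"
    using assms(5) unfolding disconnected_induced_def R_def by blast
  obtain r where r: "r \<in> M" and rr: "\<forall>m\<in>M. reach_in E M r m"
    using assms(4) unfolding connected_induced_def by blast
  have "\<forall>m\<in>M. \<exists>s. (s = 1 \<or> s = -1) \<and> (\<lambda>v. dlt r v - s * dlt m v) \<in> divset E M"
    using walk_lemma[OF _ r sE iE finM] rr by blast
  then obtain s where s: "\<forall>m\<in>M. (s m = 1 \<or> s m = -1) \<and> (\<lambda>v. dlt r v - s m * dlt m v) \<in> divset E M"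
    by (rule bchoice[elim_format]) blast
  define cp :: "'a \<Rightarrow> complex" where "cp w = (if R p w then 1 else 0)" for w
  define cq :: "'a \<Rightarrow> complex" where "cq w = (if R p w then 0 else if R q w then 1 else 0)" for w
  define bp where "bp v = - (\<Sum>w\<in>nbhd E v - M. cp w)" for v
  define bq where "bq v = - (\<Sum>w\<in>nbhd E v - M. cq w)" for v
  define P where "P = (\<Sum>m\<in>M. s m * bp m)"
  define Q where "Q = (\<Sum>m\<in>M. s m * bq m)"
  obtain \<alpha> \<beta> where ab: "\<alpha> * P + \<beta> * Q = 0" and abn: "\<alpha> \<noteq> 0 \<or> \<beta> \<noteq> 0"
  proof (cases "P = 0 \<and> Q = 0")
    case True
    show ?thesis by (rule that[of 1 0]) (use True in simp_all)
  next
    case False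
    show ?thesis by (rule that[of Q "-P"]) (use False in \<open>auto simp: algebra_simps\<close>)
  qed
  define c where "c w = \<alpha> * cp w + \<beta> * cq w" for w
  define b where "b v = - (\<Sum>w\<in>nbhd E v - M. c w)" for v
  have bsplit: "s m * b m = \<alpha> * (s m * bp m) + \<beta> * (s m * bq m)" for m
    unfolding b_def bp_def bq_def c_def by (simp add: sum.distrib sum_distrib_left algebra_simps)
  have "(\<Sum>m\<in>M. s m * b m) = \<alpha> * P + \<beta> * Q"
    unfolding bsplit P_def Q_def by (simp add: sum.distrib sum_distrib_left)
  then have "(\<Sum>m\<in>M. s m * b m) = 0" using ab by simp
  then have "b \<in> divset E M" using solve_lemma[OF finM r s] by blast
  then obtain x where xs: "\<forall>a b. x (a, b) = x (b, a)"
    and xb: "\<forall>v\<in>M. b v = (\<Sum>w\<in>nbhd E v \<inter> M. x (v, w))"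
    unfolding divset_def by blast
  have bal: "\<forall>v\<in>M. (\<Sum>w\<in>nbhd E v \<inter> M. x (v, w)) = - (\<Sum>w\<in>nbhd E v - M. c w)"
    using xb by (simp add: b_def)
  have cc: "c u = c v" if uv: "(u, v) \<in> E" and u: "u \<notin> M" and v: "v \<notin> M" for u v
  proof -
    have vu: "(v, u) \<in> E" using uv sE by (meson symD)
    have uV: "u \<in> V - M" and vV: "v \<in> V - M" using uv EV u v by auto
    have 1: "R p u = R p v" using reach_step[OF _ uv uV vV] reach_step[OF _ vu vV uV] unfolding R_def by blast
    have 2: "R q u = R q v" using reach_step[OF _ uv uV vV] reach_step[OF _ vu vV uV] unfolding R_def by blast
    show ?thesis unfolding c_def cp_def cq_def 1 2 by (rule refl)
  qed
  define \<psi> where "\<psi> = (\<lambda>(u, v). if (u, v) \<in> E then (if u \<notin> M then c u else if v \<notin> M then c v else x (u, v)) else 0)"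
  have stat: "walk_op E M \<psi> = \<psi>"
    by (rule stat_lemma[OF assms(1) cc xs bal \<psi>_def])
  have ist: "is_state E \<psi>" unfolding is_state_def \<psi>_def by auto
  have Rpp: "R p p" and Rqq: "R q q" unfolding R_def reach_in_def by auto
  have nbr: "\<exists>y. (a, y) \<in> E" if "a \<in> V" "a' \<in> V" "a \<noteq> a'" for a a'
  proof -
    have "reach_in E V a a'" using assms(2) that unfolding connected_induced_def by blast
    then show ?thesis unfolding reach_in_def
      by (rule converse_rtranclpE) (use that in auto)
  qed
  have pq: "p \<noteq> q" using npq Rpp by blast
  have nz: "\<psi> \<noteq> (\<lambda>_. 0)"
  proof (cases "\<alpha> = 0")
    case False
    obtain y where y: "(p, y) \<in> E" using nbr[of p q] p q pq by blast
    have "c p = \<alpha>" unfolding c_def cp_def cq_def using Rpp by simp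
    then have "\<psi> (p, y) = \<alpha>" using y p by (simp add: \<psi>_def)
    then show ?thesis using False by (metis)
  next
    case True
    then have bn: "\<beta> \<noteq> 0" using abn by simp
    obtain y where y: "(q, y) \<in> E" using nbr[of q p] p q pq by blast
    have "c q = \<beta>" unfolding c_def cp_def cq_def using Rqq npq True by simp
    then have "\<psi> (q, y) = \<beta>" using y q by (simp add: \<psi>_def)
    then show ?thesis using bn by (metis)
  qed
  show ?thesis unfolding stationary_state_def using stat ist nz by blast
qed

end
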